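(* Let $f$ be a $C^\infty$ function on $\mathbb R$ with no flat zero, i.e. for every $x$ with $f(x)=0$ there exists $r\in\mathbb N$ with $f^{(r)}(x)\neq0$. Let $F$ be a $C^1$ function on $\mathbb R$ with $\lim_{x\to-\infty}F(x)=-1$ and $\lim_{x\to+\infty}F(x)=1$. Let $a<b$ with $f(a)f(b)\neq0$. Then the number of zeros of $f$ in $[a,b]$ (counted without multiplicity) is finite and $$\mathcal H^0(\{f=0\}\cap[a,b])=\frac12\Big[F\Big(\frac{f'}{f}(b)\Big)-F\Big(\frac{f'}{f}(a)\Big)-\int_a^bF'\Big(\frac{f'(x)}{f(x)}\Big)\Big(\frac{f'(x)}{f(x)}\Big)'dx\Big],$$ where the integrand is defined where $f(x)\neq0$ and the integral is the sum of the (improper) integrals over the open intervals of $[a,b]$ between consecutive zeros of $f$.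
   Context: $\mathcal H^0(\{f=0\}\cap[a,b])$ denotes the number of distinct zeros of $f$ in $[a,b]$. *)

theory Defs
  imports "HOL-Analysis.Analysis"
begin

definition improper_integral_open :: "(real \<Rightarrow> real) \<Rightarrow> real \<Rightarrow> real \<Rightarrow> real \<Rightarrow> bool" where
  "improper_integral_open h c d I \<longleftrightarrow>
     (\<forall>s t. c < s \<and> s \<le> t \<and> t < d \<longrightarrow> h integrable_on {s..t}) \<and>
     ((\<lambda>(s, t). integral {s..t} h) \<longlongrightarrow> I) (at_right c \<times>\<^sub>F at_left d)"

definition split_improper_integral ::
  "(real \<Rightarrow> real) \<Rightarrow> (real \<Rightarrow> real) \<Rightarrow> real \<Rightarrow> real \<Rightarrow> real \<Rightarrow> bool" where
  "split_improper_integral h f a b I \<longleftrightarrow>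
     (let p = sorted_list_of_set ({a, b} \<union> {x \<in> {a..b}. f x = 0}) in
      \<exists>Is :: real list. length Is = length p - 1 \<and>
        (\<forall>i < length p - 1. improper_integral_open h (p ! i) (p ! Suc i) (Is ! i)) \<and>
        I = sum_list Is)"

end

theory Submission
  imports Defs
begin

lemma ev_nonzero_step:
  fixes g g' :: "real \<Rightarrow> real"
  assumes g0: "g c = 0" and dg: "\<And>x. (g has_real_derivative g' x) (at x)"
    and ev: "eventually (\<lambda>x. g' x \<noteq> 0) (at c)"
  shows "eventually (\<lambda>x. g x \<noteq> 0) (at c)"
proof -
  from ev obtain d where d: "d > 0" "\<And>x. x \<noteq> c \<Longrightarrow> dist x c < d \<Longrightarrow> g' x \<noteq> 0"
    unfolding eventually_at by blast
  have "g x \<noteq> 0" if "x \<noteq> c" "dist x c < d" for x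
  proof (cases "x < c")
    case True
    from MVT2[OF True, of g g'] dg obtain z where z: "z > x" "z < c" "g c - g x = (c - x) * g' z" by blast
    have "g' z \<noteq> 0" using d(2)[of z] z that True by (auto simp: dist_real_def)
    then show ?thesis using z g0 True by auto
  next
    case False
    then have xc: "c < x" using that by auto
    from MVT2[OF xc, of g g'] dg obtain z where z: "z > c" "z < x" "g x - g c = (x - c) * g' z" by blast
    have "g' z \<noteq> 0" using d(2)[of z] z that xc by (auto simp: dist_real_def)
    then show ?thesis using z g0 xc by auto
  qed
  then show ?thesis unfolding eventually_at using d(1) by blast
qed

lemma sign_right:
  fixes g g' :: "real \<Rightarrow> real"
  assumes g0: "g c = 0" and dg: "\<And>x. (g has_real_derivative g' x) (at x)"
    and cg': "\<And>x. isCont g' x"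
    and ev: "eventually (\<lambda>x. g x \<noteq> 0 \<and> g' x \<noteq> 0) (at_right c)"
  shows "eventually (\<lambda>x. g x * g' x > 0) (at_right c)"
proof -
  from ev obtain b where b: "b > c" "\<And>y. y > c \<Longrightarrow> y < b \<Longrightarrow> g y \<noteq> 0 \<and> g' y \<noteq> 0"
    unfolding eventually_at_right_field by blast
  have cg: "isCont g x" for x using dg by (rule DERIV_isCont)
  have "g y * g' y > 0" if y: "y > c" "y < b" for y
  proof (rule ccontr)
    assume "\<not> g y * g' y > 0"
    moreover have "g y * g' y \<noteq> 0" using b(2)[OF y] by simp
    ultimately have neg: "g y * g' y < 0" by linarith
    have dq: "\<And>x. ((\<lambda>x. g x * g x) has_real_derivative g' x * g x + g' x * g x) (at x)"
      using DERIV_mult[OF dg dg] by blast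
    from MVT2[OF y(1), of "\<lambda>x. g x * g x" "\<lambda>x. g' x * g x + g' x * g x"] dq obtain z where
      z: "z > c" "z < y" "g y * g y - g c * g c = (y - c) * (g' z * g z + g' z * g z)" by blast
    have "g y * g y > 0" using b(2)[OF y] by (metis not_real_square_gt_zero)
    then have "(y - c) * (2 * (g z * g' z)) > 0" using z g0 by (simp add: algebra_simps)
    then have pos: "g z * g' z > 0" using y by (simp add: zero_less_mult_iff)
    have "\<exists>x. z \<le> x \<and> x \<le> y \<and> g x * g' x = 0"
      by (rule IVT2[of "\<lambda>x. g x * g' x"]) (use neg pos z in \<open>auto intro!: continuous_intros cg cg'\<close>)
    then obtain x where "z \<le> x" "x \<le> y" "g x * g' x = 0" by blast
    then show False using b(2)[of x] z y by auto
  qed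
  then show ?thesis unfolding eventually_at_right_field using b(1) by blast
qed

lemma sign_left:
  fixes g g' :: "real \<Rightarrow> real"
  assumes g0: "g c = 0" and dg: "\<And>x. (g has_real_derivative g' x) (at x)"
    and cg': "\<And>x. isCont g' x"
    and ev: "eventually (\<lambda>x. g x \<noteq> 0 \<and> g' x \<noteq> 0) (at_left c)"
  shows "eventually (\<lambda>x. g x * g' x < 0) (at_left c)"
proof -
  from ev obtain b where b: "b < c" "\<And>y. y > b \<Longrightarrow> y < c \<Longrightarrow> g y \<noteq> 0 \<and> g' y \<noteq> 0"
    unfolding eventually_at_left_field by blast
  have cg: "isCont g x" for x using dg by (rule DERIV_isCont)
  have "g y * g' y < 0" if y: "y > b" "y < c" for y
  proof (rule ccontr)
    assume "\<not> g y * g' y < 0"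
    moreover have "g y * g' y \<noteq> 0" using b(2)[OF y] by simp
    ultimately have neg: "g y * g' y > 0" by linarith
    have dq: "\<And>x. ((\<lambda>x. g x * g x) has_real_derivative g' x * g x + g' x * g x) (at x)"
      using DERIV_mult[OF dg dg] by blast
    from MVT2[OF y(2), of "\<lambda>x. g x * g x" "\<lambda>x. g' x * g x + g' x * g x"] dq obtain z where
      z: "z > y" "z < c" "g c * g c - g y * g y = (c - y) * (g' z * g z + g' z * g z)" by blast
    have "g y * g y > 0" using b(2)[OF y] by (metis not_real_square_gt_zero)
    then have "(c - y) * (2 * (g z * g' z)) < 0" using z g0 by (simp add: algebra_simps)
    then have pos: "g z * g' z < 0" using y by (simp add: mult_less_0_iff)
    have "\<exists>x. y \<le> x \<and> x \<le> z \<and> g x * g' x = 0"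
      by (rule IVT2[of "\<lambda>x. g x * g' x"]) (use neg pos z in \<open>auto intro!: continuous_intros cg cg'\<close>)
    then obtain x where "y \<le> x" "x \<le> z" "g x * g' x = 0" by blast
    then show False using b(2)[of x] z y by auto
  qed
  then show ?thesis unfolding eventually_at_left_field using b(1) by blast
qed

lemma improper_FTC:
  fixes G h :: "real \<Rightarrow> real"
  assumes cd: "c < d"
    and dG: "\<And>x. c < x \<Longrightarrow> x < d \<Longrightarrow> (G has_real_derivative h x) (at x)"
    and lc: "(G \<longlongrightarrow> Lc) (at_right c)" and rd: "(G \<longlongrightarrow> Rd) (at_left d)"
  shows "improper_integral_open h c d (Rd - Lc)"
proof -
  have hi: "(h has_integral G t - G s) {s..t}" if "c < s" "s \<le> t" "t < d" for s t
  proof (rule fundamental_theorem_of_calculus)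
    show "s \<le> t" by fact
    fix x assume "x \<in> {s..t}"
    then have "(G has_real_derivative h x) (at x)" using that by (intro dG) auto
    then have "(G has_real_derivative h x) (at x within {s..t})" by (rule has_field_derivative_at_within)
    then show "(G has_vector_derivative h x) (at x within {s..t})"
      using has_real_derivative_iff_has_vector_derivative by blast
  qed
  let ?m = "(c + d) / 2"
  have e1: "eventually (\<lambda>s. c < s \<and> s < ?m) (at_right c)"
    using cd unfolding eventually_at_right_field by (intro exI[of _ ?m]) auto
  have e2: "eventually (\<lambda>t. ?m < t \<and> t < d) (at_left d)"
    using cd unfolding eventually_at_left_field by (intro exI[of _ ?m]) auto
  have ev: "eventually (\<lambda>p. (case p of (s, t) \<Rightarrow> G t - G s) = (case p of (s, t) \<Rightarrow> integral {s..t} h))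
     (at_right c \<times>\<^sub>F at_left d)"
    using eventually_prodI[OF e1 e2] by eventually_elim (auto intro!: integral_unique[symmetric] hi)
  have t1: "((\<lambda>p. G (snd p)) \<longlongrightarrow> Rd) (at_right c \<times>\<^sub>F at_left d)"
    by (rule filterlim_compose[OF rd filterlim_snd])
  have t2: "((\<lambda>p. G (fst p)) \<longlongrightarrow> Lc) (at_right c \<times>\<^sub>F at_left d)"
    by (rule filterlim_compose[OF lc filterlim_fst])
  have "((\<lambda>p. case p of (s, t) \<Rightarrow> G t - G s) \<longlongrightarrow> Rd - Lc) (at_right c \<times>\<^sub>F at_left d)"
    using tendsto_diff[OF t1 t2] by (simp add: case_prod_beta)
  then have "((\<lambda>(s, t). integral {s..t} h) \<longlongrightarrow> Rd - Lc) (at_right c \<times>\<^sub>F at_left d)"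
    using ev by (rule tendsto_cong[THEN iffD1, rotated])
  moreover have "\<forall>s t. c < s \<and> s \<le> t \<and> t < d \<longrightarrow> h integrable_on {s..t}"
    using hi by blast
  ultimately show ?thesis unfolding improper_integral_open_def by blast
qed

context
  fixes f :: "real \<Rightarrow> real"
  assumes f_smooth: "\<And>k x. ((deriv ^^ k) f) differentiable (at x)"
begin

lemma D_deriv: "((deriv ^^ k) f has_real_derivative (deriv ^^ Suc k) f x) (at x)"
  using f_smooth[of k x] by (simp add: DERIV_deriv_iff_real_differentiable)

lemma D_cont: "isCont ((deriv ^^ k) f) x"
  using D_deriv by (rule DERIV_isCont)

lemma zero_behaviour:
  assumes fc: "f c = 0" and r: "(deriv ^^ r) f c \<noteq> 0"
  shows "eventually (\<lambda>x. f x \<noteq> 0) (at c)"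
    and "LIM x at_right c. deriv f x / f x :> at_top"
    and "LIM x at_left c. deriv f x / f x :> at_bot"
proof -
  define D where "D k = (deriv ^^ k) f" for k
  define m where "m = (LEAST r. D r c \<noteq> 0)"
  have Dm: "D m c \<noteq> 0" unfolding m_def using r D_def by (metis (mono_tags) LeastI)
  have Dj: "D j c = 0" if "j < m" for j using not_less_Least[of j "\<lambda>r. D r c \<noteq> 0"] that m_def by auto
  have D0: "D 0 = f" and D1: "D 1 = deriv f" by (simp_all add: D_def)
  have m0: "m > 0" using Dm fc D0 by (cases m) auto
  have dD: "(D k has_real_derivative D (Suc k) x) (at x)" for k x unfolding D_def by (rule D_deriv)
  have cD: "(D k \<longlongrightarrow> D k x) (at x)" for k x using D_cont[where k=k and x=x] unfolding D_def isCont_def .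
  have nz: "eventually (\<lambda>x. D j x \<noteq> 0) (at c)" if "j \<le> m" for j
    using that
  proof (induction j rule: inc_induct)
    case base
    show ?case using tendsto_imp_eventually_ne[OF cD Dm] .
  next
    case (step n)
    show ?case by (rule ev_nonzero_step[OF Dj[OF step(2)] dD step(3)])
  qed
  have quot: "((\<lambda>x. D j x / D (Suc j) x) \<longlongrightarrow> 0) (at c)" if "j \<le> m - 1" for j
    using that
  proof (induction j rule: inc_induct)
    case base
    have "((\<lambda>x. D (m - 1) x / D (Suc (m - 1)) x) \<longlongrightarrow> D (m-1) c / D (Suc (m - 1)) c) (at c)"
      by (rule tendsto_divide[OF cD cD]) (use Dm m0 in simp)
    then show ?case using Dj[of "m - 1"] m0 by simp
  next
    case (step n)
    have l1: "(D n \<longlongrightarrow> 0) (at c)" using cD[of n c] Dj[of n] step(2) by simp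
    have l2: "(D (Suc n) \<longlongrightarrow> 0) (at c)" using cD[of "Suc n" c] Dj[of "Suc n"] step(2) by simp
    show ?case
      by (rule lhopital[OF l1 l2 nz nz _ _ step(3)]) (use step(2) in \<open>auto intro!: always_eventually dD\<close>)
  qed
  have q0: "((\<lambda>x. f x / deriv f x) \<longlongrightarrow> 0) (at c)" using quot[of 0] D0 D1 by simp
  have evc: "eventually (\<lambda>x. f x \<noteq> 0 \<and> deriv f x \<noteq> 0) (at c)"
    using eventually_conj[OF nz[of 0] nz[of 1]] m0 D0 D1 by simp
  then show "eventually (\<lambda>x. f x \<noteq> 0) (at c)" by eventually_elim simp
  have df: "(f has_real_derivative deriv f x) (at x)" for x using dD[of 0 x] D0 D1 by simp
  have cf': "isCont (deriv f) x" for x using D_cont[where k=1 and x=x] by simp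
  have sr: "eventually (\<lambda>x. f x * deriv f x > 0) (at_right c)"
    by (rule sign_right[OF fc df cf']) (use evc in \<open>simp add: eventually_at_split\<close>)
  have sl: "eventually (\<lambda>x. f x * deriv f x < 0) (at_left c)"
    by (rule sign_left[OF fc df cf']) (use evc in \<open>simp add: eventually_at_split\<close>)
  have qr: "((\<lambda>x. f x / deriv f x) \<longlongrightarrow> 0) (at_right c)"
    using q0 by (rule filterlim_mono) (simp_all add: at_within_le_at)
  have ql: "((\<lambda>x. f x / deriv f x) \<longlongrightarrow> 0) (at_left c)"
    using q0 by (rule filterlim_mono) (simp_all add: at_within_le_at)
  have "LIM x at_right c. inverse (f x / deriv f x) :> at_top"
    by (rule filterlim_inverse_at_top[OF qr]) (use sr in \<open>eventually_elim, simp add: zero_less_divide_iff zero_less_mult_iff\<close>)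
  then show "LIM x at_right c. deriv f x / f x :> at_top" by (simp add: inverse_divide)
  have "LIM x at_left c. inverse (f x / deriv f x) :> at_bot"
    by (rule filterlim_inverse_at_bot[OF ql]) (use sl in \<open>eventually_elim, simp add: divide_less_0_iff mult_less_0_iff\<close>)
  then show "LIM x at_left c. deriv f x / f x :> at_bot" by (simp add: inverse_divide)
qed

lemma g_cont: "f c \<noteq> 0 \<Longrightarrow> isCont (\<lambda>x. deriv f x / f x) c"
  using D_cont[where k=1 and x=c] D_cont[where k=0 and x=c] by (intro isCont_divide) simp_all

lemma g_deriv:
  assumes "f x \<noteq> 0"
  shows "((\<lambda>y. deriv f y / f y) has_real_derivative deriv (\<lambda>y. deriv f y / f y) x) (at x)"
proof -
  have "((\<lambda>y. deriv f y / f y) has_real_derivative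
     ((deriv ^^ 2) f x * f x - deriv f x * deriv f x) / (f x * f x)) (at x)"
  proof -
    have d1: "(deriv f has_real_derivative (deriv ^^ 2) f x) (at x)"
      using D_deriv[of 1 x] by (simp add: numeral_2_eq_2)
    have d0: "(f has_real_derivative deriv f x) (at x)" using D_deriv[of 0 x] by simp
    show ?thesis using DERIV_divide[OF d1 d0 assms] .
  qed
  then have "(\<lambda>y. deriv f y / f y) differentiable (at x)" using real_differentiable_def by blast
  then show ?thesis by (simp add: DERIV_deriv_iff_real_differentiable)
qed

end

lemma sumR: "(\<Sum>i<Suc k. (if Suc i = Suc k then B else (-1::real))) = B - real k"
proof -
  have "(\<Sum>i<k. (if Suc i = Suc k then B else (-1::real))) = (\<Sum>i<k. -1)"
    by (rule sum.cong) auto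
  then show ?thesis by (simp add: sum.lessThan_Suc)
qed

lemma sumL: "(\<Sum>i<Suc k. (if i = 0 then A else (1::real))) = A + real k"
  unfolding sum.lessThan_Suc_shift by simp

theorem proposition4:
  fixes f F :: "real \<Rightarrow> real" and a b :: real
  assumes f_smooth: "\<And>k x. ((deriv ^^ k) f) differentiable (at x)"
    and no_flat_zero: "\<And>x. f x = 0 \<Longrightarrow> \<exists>r::nat. (deriv ^^ r) f x \<noteq> 0"
    and F_diff: "\<And>x. F differentiable (at x)"
    and F_C1: "continuous_on UNIV (deriv F)"
    and F_bot: "(F \<longlongrightarrow> -1) at_bot"
    and F_top: "(F \<longlongrightarrow> 1) at_top"
    and ab: "a < b"
    and fab: "f a * f b \<noteq> 0"
  shows "finite {x \<in> {a..b}. f x = 0} \<and>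
    (\<exists>I. split_improper_integral
            (\<lambda>x. deriv F (deriv f x / f x) * deriv (\<lambda>y. deriv f y / f y) x) f a b I \<and>
          real (card {x \<in> {a..b}. f x = 0}) =
            1/2 * (F (deriv f b / f b) - F (deriv f a / f a) - I))"
proof -
  let ?g = "\<lambda>x. deriv f x / f x"
  let ?G = "\<lambda>x. F (?g x)"
  let ?h = "\<lambda>x. deriv F (deriv f x / f x) * deriv (\<lambda>y. deriv f y / f y) x"
  define Z where "Z = {x \<in> {a..b}. f x = 0}"
  define Fa where "Fa = F (?g a)"
  define Fb where "Fb = F (?g b)"
  have fa: "f a \<noteq> 0" and fb: "f b \<noteq> 0" using fab by auto
  have iso: "eventually (\<lambda>x. f x \<noteq> 0) (at c)" if "f c = 0" for c
    using no_flat_zero[OF that] zero_behaviour(1)[OF f_smooth that] by blast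
  have fcont: "isCont f x" for x using D_cont[OF f_smooth, where k=0 and x=x] by simp
  have evnz: "eventually (\<lambda>y. f y \<noteq> 0) (at x)" for x
  proof (cases "f x = 0")
    case True then show ?thesis by (rule iso)
  next
    case False
    show ?thesis using tendsto_imp_eventually_ne[OF fcont[of x, unfolded isCont_def] False] .
  qed
  have Zsub: "Z \<subseteq> {a..b}" unfolding Z_def by auto
  have finZ: "finite Z"
  proof (rule ccontr)
    assume "infinite Z"
    then obtain x where x: "x \<in> {a..b}" "x islimpt Z"
      using compact_eq_Bolzano_Weierstrass[of "{a..b::real}"] compact_Icc Zsub by blast
    have "eventually (\<lambda>y. y \<notin> Z) (at x)"
      using evnz[of x] by eventually_elim (auto simp: Z_def)
    then show False using x(2) unfolding islimpt_iff_eventually by blast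
  qed
  define S where "S = {a, b} \<union> Z"
  define p where "p = sorted_list_of_set S"
  define n where "n = length p"
  have finS: "finite S" using finZ S_def by simp
  have setp: "set p = S" using finS p_def by simp
  have sortp: "sorted_wrt (<) p" unfolding p_def by (rule strict_sorted_list_of_set)
  have aZ: "a \<notin> Z" "b \<notin> Z" using fa fb Z_def by auto
  have cardS: "card S = card Z + 2" using aZ ab finZ unfolding S_def by auto
  have n_eq: "n = card Z + 2" unfolding n_def p_def using cardS finS by simp
  have Ssub: "S \<subseteq> {a..b}" using Zsub ab S_def by auto
  have p_less: "p ! i < p ! j" if "i < j" "j < n" for i j
    using sorted_wrt_nth_less[OF sortp that[unfolded n_def]] .
  have p_le: "p ! i \<le> p ! j" if "i \<le> j" "j < n" for i j
    using p_less[of i j] that by (cases "i = j") auto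
  have p_in: "p ! i \<in> S" if "i < n" for i using that setp n_def nth_mem by blast
  have p_ab: "a \<le> p ! i \<and> p ! i \<le> b" if "i < n" for i using p_in[OF that] Ssub by auto
  have p0: "p ! 0 = a"
  proof -
    have "a \<in> set p" using setp S_def by auto
    then obtain k where k: "k < n" "p ! k = a" by (auto simp: in_set_conv_nth n_def)
    have "p ! 0 \<le> a" using p_le[of 0 k] k by auto
    then show ?thesis using p_ab[of 0] k by auto
  qed
  have pn: "p ! (n - 1) = b"
  proof -
    have "b \<in> set p" using setp S_def by auto
    then obtain k where k: "k < n" "p ! k = b" by (auto simp: in_set_conv_nth n_def)
    have "b \<le> p ! (n - 1)" using p_le[of k "n - 1"] k by auto
    then show ?thesis using p_ab[of "n - 1"] k by auto
  qed
  have pZ: "f (p ! i) = 0" if "0 < i" "i < n - 1" for i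
  proof -
    have "a < p ! i" using p_less[of 0 i] p0 that by auto
    moreover have "p ! i < b" using p_less[of i "n - 1"] pn that by auto
    ultimately show ?thesis using p_in[of i] that unfolding S_def Z_def by auto
  qed
  have gap: "f x \<noteq> 0" if i: "i < n - 1" and x: "p ! i < x" "x < p ! Suc i" for i x
  proof
    assume fx: "f x = 0"
    have "i < n" "Suc i < n" using i by auto
    then have "a \<le> x" "x \<le> b" using p_ab[of i] p_ab[of "Suc i"] x by auto
    then have "x \<in> set p" using fx setp unfolding S_def Z_def by auto
    then obtain k where k: "k < n" "p ! k = x" by (auto simp: in_set_conv_nth n_def)
    show False
    proof (cases "k \<le> i")
      case True
      have "i < n" using i by auto
      then show False using p_le[of k i] True x k by auto
    next
      case False then show False using p_le[of "Suc i" k] i x k by auto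
    qed
  qed
  have Fder: "(F has_real_derivative deriv F y) (at y)" for y
    using F_diff[of y] by (simp add: DERIV_deriv_iff_real_differentiable)
  have Fcont: "isCont F y" for y using Fder by (rule DERIV_isCont)
  have Gcont: "((\<lambda>x. F (?g x)) \<longlongrightarrow> F (?g c)) (at c)" if "f c \<noteq> 0" for c
    using isCont_o2[OF g_cont[OF f_smooth that] Fcont] unfolding isCont_def .
  define L where "L (i::nat) = (if i = 0 then Fa else (1::real))" for i
  define R where "R i = (if Suc i = n - 1 then Fb else (-1::real))" for i
  define Is where "Is = map (\<lambda>i. R i - L i) [0..<n-1]"
  have int: "improper_integral_open ?h (p ! i) (p ! Suc i) (Is ! i)" if i: "i < n - 1" for i
  proof -
    have Isi: "Is ! i = R i - L i" using i Is_def by simp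
    have lc: "(?G \<longlongrightarrow> L i) (at_right (p ! i))"
    proof (cases "i = 0")
      case True
      then show ?thesis using Gcont[OF fa] p0 L_def Fa_def
        by (auto intro: filterlim_mono simp: at_within_le_at)
    next
      case False
      then have fz: "f (p ! i) = 0" using pZ i by auto
      then obtain r where "(deriv ^^ r) f (p ! i) \<noteq> 0" using no_flat_zero by blast
      then show ?thesis using filterlim_compose[OF F_top zero_behaviour(2)[OF f_smooth fz]]
        False L_def by auto
    qed
    have rd: "(?G \<longlongrightarrow> R i) (at_left (p ! Suc i))"
    proof (cases "Suc i = n - 1")
      case True
      then show ?thesis using Gcont[OF fb] pn R_def Fb_def
        by (auto intro: filterlim_mono simp: at_within_le_at)
    next
      case False
      then have fz: "f (p ! Suc i) = 0" using pZ i by auto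
      then obtain r where "(deriv ^^ r) f (p ! Suc i) \<noteq> 0" using no_flat_zero by blast
      then show ?thesis using filterlim_compose[OF F_bot zero_behaviour(3)[OF f_smooth fz]]
        False R_def by auto
    qed
    have dG: "(?G has_real_derivative ?h x) (at x)" if "p ! i < x" "x < p ! Suc i" for x
      using DERIV_chain2[OF Fder g_deriv[OF f_smooth gap[OF i that]]] .
    show ?thesis unfolding Isi
      by (rule improper_FTC[OF _ dG lc rd]) (use p_less[of i "Suc i"] i in auto)
  qed
  have sumIs: "sum_list Is = Fb - Fa - 2 * real (card Z)"
  proof -
    have nk: "n - 1 = Suc (card Z)" using n_eq by simp
    have "sum_list Is = (\<Sum>i<Suc (card Z). R i - L i)"
      unfolding Is_def nk by (simp add: interv_sum_list_conv_sum_set_nat atLeast0LessThan)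
    also have "\<dots> = (\<Sum>i<Suc (card Z). R i) - (\<Sum>i<Suc (card Z). L i)"
      by (rule sum_subtractf)
    also have "\<dots> = (Fb - real (card Z)) - (Fa + real (card Z))"
      unfolding R_def L_def nk using sumR sumL by simp
    finally show ?thesis by simp
  qed
  have "split_improper_integral ?h f a b (sum_list Is)"
  proof -
    have eq: "sorted_list_of_set ({a, b} \<union> {x \<in> {a..b}. f x = 0}) = p"
      by (simp add: p_def S_def Z_def)
    have "length Is = length p - 1" using Is_def n_def by simp
    then show ?thesis unfolding split_improper_integral_def Let_def eq
      using int n_def by blast
  qed
  moreover have "real (card Z) = 1/2 * (Fb - Fa - sum_list Is)" using sumIs by simp
  ultimately show ?thesis using finZ unfolding Z_def Fa_def Fb_def by blast
qed

end
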